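(* Let $G$ and $H$ be finite abelian groups, written additively, of the same even order $k>2$, let $f:G\to H$ be semi-planar, and suppose $S(G,H;f)$ splits into two substructures $S_1$ and $S_2$ with $\mathcal{L}(0,0)\in S_1$. For $i=1,2$ and $a\in G$ let $P_a^i=\{b\in H : \mathcal{L}(a,b)\in S_i\}$, and let $S(a,b)=\{t\in G : f(t-a)=f(t)+b\}$. Then for every non-zero $a\in G$, $$P_a^1=\{b\in H : |S(a,b)|=2\},\qquad P_a^2=\{b\in H : |S(a,b)|=0\}.$$
   Context: A function $f:G\to H$ is semi-planar if for every non-identity $a\in G$ and every $y\in H$, the equation $f(x+a)-f(x)=y$ has either $0$ or $2$ solutions $x\in G$. The incidence structure $S(G,H;f)$ has points $(x,y)\in G\times H$ and lines $\mathcal{L}(a,b)$ for $(a,b)\in G\times H$, with $(x,y)$ incident with $\mathcal{L}(a,b)$ iff $y=f(x-a)+b$. Its incidence graph is the bipartite graph on points and lines with an edge for each incident pair. $S(G,H;f)$ splits into two substructures $S_1,S_2$ if its incidence graph has exactly two connected components; $S_1$ and $S_2$ are the incidence structures formed by the points and lines of the two components, and $\mathcal{L}(a,b)\in S_i$ means the line lies in component $S_i$. *)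

theory Defs
  imports Main
begin

definition semi_planar :: "('g::ab_group_add \<Rightarrow> 'h::ab_group_add) \<Rightarrow> bool" where
  "semi_planar f \<longleftrightarrow>
     (\<forall>a. a \<noteq> 0 \<longrightarrow> (\<forall>y. card {x. f (x + a) - f x = y} = 0 \<or> card {x. f (x + a) - f x = y} = 2))"

text \<open>Vertices of the incidence graph of S(G,H;f): points Inl (x,y), lines Inr (a,b).\<close>
definition incid_edges :: "('g::ab_group_add \<Rightarrow> 'h::ab_group_add)
     \<Rightarrow> ((('g \<times> 'h) + ('g \<times> 'h)) \<times> (('g \<times> 'h) + ('g \<times> 'h))) set" where
  "incid_edges f = {(Inl (x, y), Inr (a, b)) | x y a b. y = f (x - a) + b}"

definition incid_conn :: "('g::ab_group_add \<Rightarrow> 'h::ab_group_add)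
     \<Rightarrow> ((('g \<times> 'h) + ('g \<times> 'h)) \<times> (('g \<times> 'h) + ('g \<times> 'h))) set" where
  "incid_conn f = (incid_edges f \<union> (incid_edges f)\<inverse>)\<^sup>*"

definition incid_components :: "('g::ab_group_add \<Rightarrow> 'h::ab_group_add)
     \<Rightarrow> (('g \<times> 'h) + ('g \<times> 'h)) set set" where
  "incid_components f = UNIV // incid_conn f"

definition splits_in_two :: "('g::ab_group_add \<Rightarrow> 'h::ab_group_add) \<Rightarrow> bool" where
  "splits_in_two f \<longleftrightarrow> card (incid_components f) = 2"

definition S1 :: "('g::ab_group_add \<Rightarrow> 'h::ab_group_add) \<Rightarrow> (('g \<times> 'h) + ('g \<times> 'h)) set" where
  "S1 f = incid_conn f `` {Inr (0, 0)}"

definition S2 :: "('g::ab_group_add \<Rightarrow> 'h::ab_group_add) \<Rightarrow> (('g \<times> 'h) + ('g \<times> 'h)) set" where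
  "S2 f = (THE C. C \<in> incid_components f \<and> C \<noteq> S1 f)"

definition P_lines :: "(('g \<times> 'h) + ('g \<times> 'h)) set \<Rightarrow> 'g \<Rightarrow> 'h set" where
  "P_lines C a = {b. Inr (a, b) \<in> C}"

definition Sset :: "('g::ab_group_add \<Rightarrow> 'h::ab_group_add) \<Rightarrow> 'g \<Rightarrow> 'h \<Rightarrow> 'g set" where
  "Sset f a b = {t. f (t - a) = f t + b}"

end

theory Submission
  imports Defs
begin

lemma conn_refl: "(u,u) \<in> incid_conn f"
  unfolding incid_conn_def by simp

lemma conn_sym: "(u,v) \<in> incid_conn f \<Longrightarrow> (v,u) \<in> incid_conn f"
  unfolding incid_conn_def
  by (metis converse_Un converse_converse rtrancl_converseI sup_commute)

lemma conn_trans: "(u,v) \<in> incid_conn f \<Longrightarrow> (v,w) \<in> incid_conn f \<Longrightarrow> (u,w) \<in> incid_conn f"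
  unfolding incid_conn_def by (rule rtrancl_trans)

lemma conn_edge: "y = f (x - a) + b \<Longrightarrow> (Inl (x,y), Inr (a,b)) \<in> incid_conn f"
  unfolding incid_conn_def incid_edges_def by blast

definition tr :: "'g::ab_group_add \<Rightarrow> 'h::ab_group_add \<Rightarrow> ('g \<times> 'h) + ('g \<times> 'h) \<Rightarrow> ('g \<times> 'h) + ('g \<times> 'h)" where
  "tr c d u = (case u of Inl (x,y) \<Rightarrow> Inl (x+c, y+d) | Inr (a,b) \<Rightarrow> Inr (a+c, b+d))"

lemma tr_edge: "(u,v) \<in> incid_edges f \<Longrightarrow> (tr c d u, tr c d v) \<in> incid_edges f"
  unfolding incid_edges_def tr_def by (auto simp: algebra_simps)

lemma conn_tr: "(u,v) \<in> incid_conn f \<Longrightarrow> (tr c d u, tr c d v) \<in> incid_conn f"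
  unfolding incid_conn_def
proof (induction rule: rtrancl_induct)
  case base then show ?case by simp
next
  case (step y z)
  then have "(tr c d y, tr c d z) \<in> incid_edges f \<union> (incid_edges f)\<inverse>"
    using tr_edge by blast
  then show ?case using step.IH by (rule rtrancl_into_rtrancl[rotated])
qed

lemma S1_iff: "u \<in> S1 f \<longleftrightarrow> (Inr (0,0), u) \<in> incid_conn f"
  unfolding S1_def by simp

lemma in1_add:
  assumes "Inr (a,b) \<in> S1 f" "Inr (a',b') \<in> S1 f"
  shows "Inr (a+a', b+b') \<in> S1 f"
proof -
  have "(tr a b (Inr (0,0)), tr a b (Inr (a',b'))) \<in> incid_conn f"
    using conn_tr assms(2) S1_iff by blast
  then have "(Inr (a,b), Inr (a+a',b+b')) \<in> incid_conn f" by (simp add: tr_def add.commute)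
  then show ?thesis using assms(1) S1_iff conn_trans by blast
qed

lemma in1_neg:
  assumes "Inr (a,b) \<in> S1 f"
  shows "Inr (-a, -b) \<in> S1 f"
proof -
  have "(tr (-a) (-b) (Inr (0,0)), tr (-a) (-b) (Inr (a,b))) \<in> incid_conn f"
    using conn_tr assms S1_iff by blast
  then have "(Inr (-a,-b), Inr (0,0)) \<in> incid_conn f" by (simp add: tr_def)
  then show ?thesis using S1_iff conn_sym by blast
qed

lemma in1_sum2:
  assumes K: "\<forall>u v. u \<notin> S1 f \<longrightarrow> v \<notin> S1 f \<longrightarrow> (u,v) \<in> incid_conn f"
    and "Inr (a,b) \<notin> S1 f" "Inr (c,d) \<notin> S1 f"
  shows "Inr (a+c, b+d) \<in> S1 f"
proof -
  have "Inr (-c,-d) \<notin> S1 f" using in1_neg[of "-c" "-d" f] assms(3) by auto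
  then have "(Inr (a,b), Inr (-c,-d)) \<in> incid_conn f" using K assms(2) by blast
  then have "(tr c d (Inr (a,b)), tr c d (Inr (-c,-d))) \<in> incid_conn f" by (rule conn_tr)
  then have "(Inr (a+c,b+d), Inr (0,0)) \<in> incid_conn f" by (simp add: tr_def)
  then show ?thesis using S1_iff conn_sym by blast
qed

lemma in1_double:
  assumes K: "\<forall>u v. u \<notin> S1 f \<longrightarrow> v \<notin> S1 f \<longrightarrow> (u,v) \<in> incid_conn f"
  shows "Inr (c+c, d+d) \<in> S1 f"
  using in1_add[of c d f c d] in1_sum2[OF K, of c d c d] by blast

lemma class_eq:
  assumes K: "\<forall>u v. u \<notin> S1 f \<longrightarrow> v \<notin> S1 f \<longrightarrow> (u,v) \<in> incid_conn f"
    and C: "C \<in> UNIV // incid_conn f" and ne: "C \<noteq> S1 f"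
  shows "C = - S1 f"
proof -
  obtain w where w: "C = incid_conn f `` {w}" using C by (auto elim: quotientE)
  have wn: "w \<notin> S1 f"
  proof
    assume "w \<in> S1 f"
    then have h: "(Inr (0,0), w) \<in> incid_conn f" by (simp add: S1_iff)
    have "C = S1 f"
      unfolding w S1_def using h conn_sym conn_trans by blast
    then show False using ne by simp
  qed
  show ?thesis
  proof (rule set_eqI)
    fix x show "x \<in> C \<longleftrightarrow> x \<in> - S1 f"
    proof
      assume "x \<in> C"
      then have "(w,x) \<in> incid_conn f" using w by simp
      then show "x \<in> - S1 f" using wn S1_iff conn_sym conn_trans by blast
    next
      assume "x \<in> - S1 f"
      then show "x \<in> C" using K wn w by auto
    qed
  qed
qed

lemma Sset_alt: "Sset f a b = {x. f (x + (-a)) - f x = b}"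
  unfolding Sset_def by (auto simp: algebra_simps)

lemma Sset_in1:
  assumes K: "\<forall>u v. u \<notin> S1 f \<longrightarrow> v \<notin> S1 f \<longrightarrow> (u,v) \<in> incid_conn f"
  assumes "Sset f a b \<noteq> {}"
  shows "Inr (a,b) \<in> S1 f"
proof -
  obtain t where t: "f (t - a) = f t + b" using assms unfolding Sset_def by auto
  have 1: "(Inl (t, f t), Inr (0,0)) \<in> incid_conn f" by (rule conn_edge) simp
  have 2: "(Inl (t, f t), Inr (a,-b)) \<in> incid_conn f" by (rule conn_edge) (simp add: t)
  have "Inr (a,-b) \<in> S1 f" using 1 2 S1_iff conn_sym conn_trans by blast
  from in1_add[OF this in1_double[OF K, of 0 b]] show ?thesis by simp
qed

theorem lemma4:
  fixes f :: "'g::{ab_group_add, finite} \<Rightarrow> 'h::{ab_group_add, finite}"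
  assumes "card (UNIV::'g set) = card (UNIV::'h set)"
    and "even (card (UNIV::'g set))"
    and "card (UNIV::'g set) > 2"
    and "semi_planar f"
    and "splits_in_two f"
  shows "\<forall>a::'g. a \<noteq> 0 \<longrightarrow>
           P_lines (S1 f) a = {b. card (Sset f a b) = 2} \<and>
           P_lines (S2 f) a = {b. card (Sset f a b) = 0}"
proof -
  let ?R = "incid_conn f"
  let ?Q = "UNIV // incid_conn f"
  have Q2: "card ?Q = 2" using assms(5) unfolding splits_in_two_def incid_components_def .
  have finQ: "finite ?Q" by simp
  have C1Q: "S1 f \<in> ?Q" unfolding S1_def by (rule quotientI) simp
  have K: "\<forall>u v. u \<notin> S1 f \<longrightarrow> v \<notin> S1 f \<longrightarrow> (u,v) \<in> incid_conn f"
  proof (intro allI impI)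
    fix u v assume u: "u \<notin> S1 f" and v: "v \<notin> S1 f"
    have XQ: "?R `` {u} \<in> ?Q" "?R `` {v} \<in> ?Q" by (auto intro: quotientI)
    have Xn: "?R `` {u} \<noteq> S1 f" using u conn_refl by blast
    have Yn: "?R `` {v} \<noteq> S1 f" using v conn_refl by blast
    show "(u,v) \<in> ?R"
    proof (rule ccontr)
      assume nr: "(u,v) \<notin> ?R"
      have "?R `` {u} \<noteq> ?R `` {v}" using nr conn_refl[of v f] by blast
      then have "card {S1 f, ?R `` {u}, ?R `` {v}} = 3" using Xn Yn by auto
      moreover have "card {S1 f, ?R `` {u}, ?R `` {v}} \<le> card ?Q"
        by (rule card_mono[OF finQ]) (use XQ C1Q in auto)
      ultimately show False using Q2 by simp
    qed
  qed
  obtain X0 where X0: "X0 \<in> ?Q" "X0 \<noteq> S1 f"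
    using Q2 C1Q by (metis card_2_iff insert_iff)
  have X0e: "X0 = - S1 f" using class_eq[OF K X0] .
  have S2e: "S2 f = - S1 f"
    unfolding S2_def incid_components_def
  proof (rule the_equality)
    show "- S1 f \<in> ?Q \<and> - S1 f \<noteq> S1 f" using X0 X0e by auto
  next
    fix C assume "C \<in> ?Q \<and> C \<noteq> S1 f"
    then show "C = - S1 f" using class_eq[OF K] by blast
  qed
  obtain u0 where u0: "u0 \<notin> S1 f"
  proof -
    obtain w where "X0 = ?R `` {w}" using X0(1) by (auto elim: quotientE)
    then have "w \<in> X0" using conn_refl by blast
    then show ?thesis using that X0e by blast
  qed
  obtain a0 b0 where ab0: "Inr (a0,b0) \<notin> S1 f"
  proof (cases u0)
    case (Inl p)
    obtain x y where p: "p = (x,y)" by fastforce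
    have "(Inl (x,y), Inr (x, y - f 0)) \<in> ?R" by (rule conn_edge) simp
    then have "Inr (x, y - f 0) \<notin> S1 f" using u0 Inl p S1_iff conn_sym conn_trans by blast
    then show ?thesis using that by blast
  next
    case (Inr p)
    then show ?thesis using that u0 by (metis surj_pair)
  qed
  have card02: "card (Sset f a b) = 0 \<or> card (Sset f a b) = 2" if "a \<noteq> 0" for a b
  proof -
    have "-a \<noteq> 0" using that by simp
    then have "card {x. f (x + (-a)) - f x = b} = 0 \<or> card {x. f (x + (-a)) - f x = b} = 2"
      using assms(4) unfolding semi_planar_def by blast
    then show ?thesis unfolding Sset_alt .
  qed
  have sumk: "(\<Sum>b\<in>UNIV. card (Sset f a b)) = card (UNIV::'g set)" for a
  proof -
    have "UNIV = (\<Union>b\<in>UNIV. Sset f a b)" unfolding Sset_def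
    proof (auto)
      fix x show "\<exists>xa. f (x - a) = f x + xa" by (rule exI[of _ "f (x - a) - f x"]) simp
    qed
    then have "card (UNIV::'g set) = card (\<Union>b\<in>UNIV. Sset f a b)" by simp
    also have "\<dots> = (\<Sum>b\<in>UNIV. card (Sset f a b))"
      by (rule card_UN_disjoint) (auto simp: Sset_def)
    finally show ?thesis by simp
  qed
  have cardA: "2 * card {b. card (Sset f a b) = 2} = card (UNIV::'g set)" if "a \<noteq> 0" for a
  proof -
    have "(\<Sum>b\<in>UNIV. card (Sset f a b)) = (\<Sum>b\<in>UNIV. if card (Sset f a b) = 2 then 2 else 0)"
      by (rule sum.cong) (use card02[OF that] in auto)
    also have "\<dots> = 2 * card {b. card (Sset f a b) = 2}"
      by (simp add: sum.If_cases)
    finally show ?thesis using sumk by simp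
  qed
  have exA: "\<exists>b. card (Sset f a b) = 2" if "a \<noteq> 0" for a
  proof (rule ccontr)
    assume "\<not> ?thesis"
    then have "{b. card (Sset f a b) = 2} = {}" by auto
    then show False using cardA[OF that] assms(3) by simp
  qed
  obtain d0 where d0: "Inr (0,d0) \<notin> S1 f"
  proof (rule ccontr)
    assume "\<not> thesis"
    then have all: "Inr (0,d) \<in> S1 f" for d using that by blast
    have nb: "Inr (a0,b) \<notin> S1 f" for b
    proof
      assume "Inr (a0,b) \<in> S1 f"
      from in1_add[OF this all[of "b0 - b"]] ab0 show False by simp
    qed
    show False
    proof (cases "a0 = 0")
      case True then show False using ab0 all by simp
    next
      case False
      then obtain b where "card (Sset f a0 b) = 2" using exA by blast
      then have "Sset f a0 b \<noteq> {}" by auto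
      from Sset_in1[OF K this] nb show False by blast
    qed
  qed
  have d0': "Inr (0,-d0) \<notin> S1 f" using in1_neg[of 0 "-d0" f] d0 by auto
  show ?thesis
  proof (intro allI impI)
    fix a :: 'g assume a: "a \<noteq> 0"
    let ?P = "{b. Inr (a,b) \<in> S1 f}"
    let ?A = "{b. card (Sset f a b) = 2}"
    have AP: "?A \<subseteq> ?P"
    proof
      fix b assume "b \<in> ?A"
      then have "Sset f a b \<noteq> {}" by auto
      from Sset_in1[OF K this] show "b \<in> ?P" by simp
    qed
    have c1: "card ?P \<le> card (- ?P)"
    proof (rule card_inj_on_le[of "\<lambda>b. b + d0"])
      show "inj_on (\<lambda>b. b + d0) ?P" by (auto simp: inj_on_def)
      show "(\<lambda>b. b + d0) ` ?P \<subseteq> - ?P"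
      proof
        fix c assume "c \<in> (\<lambda>b. b + d0) ` ?P"
        then obtain b where b: "Inr (a,b) \<in> S1 f" "c = b + d0" by auto
        show "c \<in> - ?P"
        proof
          assume "c \<in> ?P"
          then have "Inr (a, b + d0) \<in> S1 f" using b by simp
          from in1_add[OF this in1_neg[OF b(1)]] d0 show False by simp
        qed
      qed
    qed simp
    have c2: "card (- ?P) \<le> card ?P"
    proof (rule card_inj_on_le[of "\<lambda>b. b + -d0"])
      show "inj_on (\<lambda>b. b + -d0) (- ?P)" by (auto simp: inj_on_def)
      show "(\<lambda>b. b + -d0) ` (- ?P) \<subseteq> ?P"
      proof
        fix c assume "c \<in> (\<lambda>b. b + -d0) ` (- ?P)"
        then obtain b where b: "Inr (a,b) \<notin> S1 f" "c = b + -d0" by auto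
        from in1_sum2[OF K b(1) d0'] b(2) show "c \<in> ?P" by simp
      qed
    qed simp
    have "card ?P + card (- ?P) = card (UNIV::'h set)"
      using card_Un_disjoint[of ?P "- ?P"] by (simp add: Compl_partition)
    then have cP: "2 * card ?P = card (UNIV::'h set)" using c1 c2 by simp
    have eq: "?A = ?P"
      by (rule card_subset_eq) (use AP cP cardA[OF a] assms(1) in auto)
    show "P_lines (S1 f) a = ?A \<and> P_lines (S2 f) a = {b. card (Sset f a b) = 0}"
    proof
      show "P_lines (S1 f) a = ?A" unfolding P_lines_def using eq by simp
      show "P_lines (S2 f) a = {b. card (Sset f a b) = 0}"
        unfolding P_lines_def S2e
      proof (rule set_eqI)
        fix b
        have "Inr (a,b) \<in> S1 f \<longleftrightarrow> card (Sset f a b) = 2" using eq by blast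
        then show "b \<in> {b. Inr (a, b) \<in> - S1 f} \<longleftrightarrow> b \<in> {b. card (Sset f a b) = 0}"
          using card02[OF a, of b] by auto
      qed
    qed
  qed
qed

end
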